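(* Let $\{S_{\mathbf a^{*[k]}},\,k\ge0\}$ be a local, bounded (i.e. $\sup_k\|S_{\mathbf a^{*[k]}}\|<\infty$) subdivision scheme that reproduces constants and satisfies Condition A. Then every local subdivision scheme $\{S_{\mathbf a^{[k]}},\,k\ge0\}$ that reproduces constants and is asymptotically similar to $\{S_{\mathbf a^{*[k]}},\,k\ge0\}$ (i.e. $\lim_{k\to\infty}\|\mathbf a^{[k]}-\mathbf a^{*[k]}\|=0$) also satisfies Condition A.
   Context: A subdivision scheme $\{S_{\mathbf a^{[k]}},\,k\ge0\}$ is given by finitely supported masks $\mathbf a^{[k]}=\{a^{[k]}_i\}_{i\in\mathbb Z}$ and operators $(S_{\mathbf a^{[k]}}\mathbf f)_i=\sum_{j\in\mathbb Z}a^{[k]}_{i-2j}f_j$ on $\mathbf f\in\mathbb R^{\mathbb Z}$. Local means: there is a positive integer $N$ with all masks supported in $[-N,N]$. Norms are sup-norms: $\|\mathbf a\|=\sup_i|a_i|$, and $\|S_{\mathbf a}\|=\max(\sum_i|a_{2i}|,\sum_i|a_{2i+1}|)$ (operator sup-norm). The scheme reproduces constants if $\sum_ia^{[k]}_{2i}=\sum_ia^{[k]}_{2i+1}=1$ for all $k$; then its difference scheme $\{S_{\mathbf q^{[k]}}\}$ has masks $q^{[k]}_i=\sum_{j\le i}(-1)^{i-j}a^{[k]}_j$. A scheme reproducing constants satisfies Condition A if there exist integers $K\ge0$, $n>0$ with $\sup_{k\ge K}\|S_{\mathbf q^{[k+n-1]}}\cdots S_{\mathbf q^{[k+1]}}S_{\mathbf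 q^{[k]}}\|<1$. *)

theory Defs
  imports "HOL-Analysis.Analysis"
begin

type_synonym mask = "int \<Rightarrow> real"
type_synonym seq = "int \<Rightarrow> real"

definition sub_op :: "mask \<Rightarrow> seq \<Rightarrow> seq" where
  "sub_op a f i = (\<Sum>j \<in> {j. a (i - 2*j) \<noteq> 0}. a (i - 2*j) * f j)"

definition local_scheme :: "(nat \<Rightarrow> mask) \<Rightarrow> bool" where
  "local_scheme a \<longleftrightarrow> (\<exists>N::int. N > 0 \<and> (\<forall>k i. \<bar>i\<bar> > N \<longrightarrow> a k i = 0))"

definition mask_norm :: "mask \<Rightarrow> real" where
  "mask_norm a = (SUP i. \<bar>a i\<bar>)"

text \<open>Norm of S_a: max of sums of absolute values of even / odd entries.\<close>
definition sub_norm :: "mask \<Rightarrow> real" where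
  "sub_norm a = max (\<Sum>i \<in> {i. a (2*i) \<noteq> 0}. \<bar>a (2*i)\<bar>)
                    (\<Sum>i \<in> {i. a (2*i+1) \<noteq> 0}. \<bar>a (2*i+1)\<bar>)"

definition op_norm :: "(seq \<Rightarrow> seq) \<Rightarrow> ereal" where
  "op_norm T = (SUP f \<in> {f. \<forall>j. \<bar>f j\<bar> \<le> 1}. SUP i. ereal \<bar>T f i\<bar>)"

definition reproduces_constants :: "(nat \<Rightarrow> mask) \<Rightarrow> bool" where
  "reproduces_constants a \<longleftrightarrow>
     (\<forall>k. (\<Sum>i \<in> {i. a k (2*i) \<noteq> 0}. a k (2*i)) = 1 \<and>
          (\<Sum>i \<in> {i. a k (2*i+1) \<noteq> 0}. a k (2*i+1)) = 1)"

definition diff_mask :: "mask \<Rightarrow> mask" where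
  "diff_mask a i = (\<Sum>j \<in> {j. j \<le> i \<and> a j \<noteq> 0}. (-1) ^ nat (i - j) * a j)"

fun sub_comp :: "(nat \<Rightarrow> mask) \<Rightarrow> nat \<Rightarrow> nat \<Rightarrow> seq \<Rightarrow> seq" where
  "sub_comp q k 0 = id"
| "sub_comp q k (Suc n) = sub_op (q (k + n)) \<circ> sub_comp q k n"

definition condition_A :: "(nat \<Rightarrow> mask) \<Rightarrow> bool" where
  "condition_A a \<longleftrightarrow> (\<exists>K n::nat. n > 0 \<and>
      (SUP k \<in> {K..}. op_norm (sub_comp (\<lambda>k. diff_mask (a k)) k n)) < 1)"

end

theory Submission
  imports Defs
begin

definition JJ :: "int \<Rightarrow> int \<Rightarrow> int set" where "JJ M i = {j. \<bar>i - 2*j\<bar> \<le> M}"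

lemma JJ_finite: "finite (JJ M i)"
proof -
  have "JJ M i \<subseteq> (\<lambda>m. (i - m) div 2) ` {-M..M}"
  proof
    fix j assume "j \<in> JJ M i"
    then have "i - 2*j \<in> {-M..M}" "j = (i - (i - 2*j)) div 2" by (auto simp: JJ_def)
    then show "j \<in> (\<lambda>m. (i - m) div 2) ` {-M..M}" by blast
  qed
  then show ?thesis by (rule finite_subset) auto
qed

lemma sub_op_eq:
  assumes "\<forall>m. \<bar>m\<bar> > M \<longrightarrow> q m = 0"
  shows "sub_op q f i = (\<Sum>j\<in>JJ M i. q (i - 2*j) * f j)"
  unfolding sub_op_def
proof (rule sum.mono_neutral_left[OF JJ_finite])
  show "{j. q (i - 2 * j) \<noteq> 0} \<subseteq> JJ M i" using assms by (force simp: JJ_def)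
  show "\<forall>x\<in>JJ M i - {j. q (i - 2 * j) \<noteq> 0}. q (i - 2 * x) * f x = 0" by auto
qed

lemma sum_const_int: "(\<Sum>m\<in>{-M..M::int}. (c::real)) = real_of_int (2*M+1) * c" if "M \<ge> 0"
  using that by simp

lemma sub_op_bound:
  assumes "M \<ge> 0" "\<forall>m. \<bar>m\<bar> > M \<longrightarrow> q m = 0" "\<forall>m. \<bar>q m\<bar> \<le> Qb" "\<forall>j. \<bar>f j\<bar> \<le> Fb"
  shows "\<bar>sub_op q f i\<bar> \<le> real_of_int (2*M+1) * Qb * Fb"
proof -
  have Fb: "Fb \<ge> 0" using assms(4) by (meson abs_ge_zero order_trans)
  have "\<bar>sub_op q f i\<bar> \<le> (\<Sum>j\<in>JJ M i. \<bar>q (i - 2*j) * f j\<bar>)"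
    unfolding sub_op_eq[OF assms(2)] by (rule sum_abs)
  also have "\<dots> \<le> (\<Sum>j\<in>JJ M i. \<bar>q (i - 2*j)\<bar> * Fb)"
    by (rule sum_mono) (simp add: abs_mult assms(4) mult_left_mono)
  also have "\<dots> = Fb * (\<Sum>j\<in>JJ M i. \<bar>q (i - 2*j)\<bar>)" by (simp add: sum_distrib_left mult.commute)
  finally have A: "\<bar>sub_op q f i\<bar> \<le> Fb * (\<Sum>j\<in>JJ M i. \<bar>q (i - 2*j)\<bar>)" .
  have "(\<Sum>j\<in>JJ M i. \<bar>q (i - 2*j)\<bar>) = (\<Sum>m\<in>(\<lambda>j. i - 2*j) ` JJ M i. \<bar>q m\<bar>)"
    by (subst sum.reindex) (auto simp: inj_on_def)
  also have "\<dots> \<le> (\<Sum>m\<in>{-M..M}. \<bar>q m\<bar>)"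
    by (rule sum_mono2) (auto simp: JJ_def)
  also have "\<dots> \<le> (\<Sum>m\<in>{-M..M}. Qb)" by (rule sum_mono) (simp add: assms(3))
  also have "\<dots> = real_of_int (2*M+1) * Qb" using assms(1) by simp
  finally have B: "(\<Sum>j\<in>JJ M i. \<bar>q (i - 2*j)\<bar>) \<le> real_of_int (2*M+1) * Qb" .
  have "Fb * (\<Sum>j\<in>JJ M i. \<bar>q (i - 2*j)\<bar>) \<le> Fb * (real_of_int (2*M+1) * Qb)"
    using B Fb by (rule mult_left_mono)
  with A show ?thesis by (simp add: ac_simps)
qed

lemma sub_op_lin:
  assumes "\<forall>m. \<bar>m\<bar> > M \<longrightarrow> q m = 0" "\<forall>m. \<bar>m\<bar> > M \<longrightarrow> q' m = 0"
  shows "sub_op q f i - sub_op q' f' i = sub_op q (\<lambda>j. f j - f' j) i + sub_op (\<lambda>m. q m - q' m) f' i"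
proof -
  have s: "\<forall>m. \<bar>m\<bar> > M \<longrightarrow> q m - q' m = 0" using assms by simp
  show ?thesis
    unfolding sub_op_eq[OF assms(1)] sub_op_eq[OF assms(2)] sub_op_eq[OF s]
    by (simp add: sum_subtractf[symmetric] sum.distrib[symmetric] algebra_simps)
qed

lemma comp_est:
  fixes q qs :: "nat \<Rightarrow> mask"
  assumes M: "M \<ge> 0"
    and sq: "\<forall>t m. \<bar>m\<bar> > M \<longrightarrow> q t m = 0"
    and sqs: "\<forall>t m. \<bar>m\<bar> > M \<longrightarrow> qs t m = 0"
    and bq: "\<forall>t\<ge>k. \<forall>m. \<bar>q t m\<bar> \<le> Qb"
    and bqs: "\<forall>t\<ge>k. \<forall>m. \<bar>qs t m\<bar> \<le> Qb"
    and dq: "\<forall>t\<ge>k. \<forall>m. \<bar>q t m - qs t m\<bar> \<le> e"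
    and C: "C = real_of_int (2*M+1) * Qb" "C \<ge> 1" and e: "e \<ge> 0"
    and f: "\<forall>j. \<bar>f j\<bar> \<le> 1"
  shows "\<forall>i. \<bar>sub_comp qs k n f i\<bar> \<le> C^n \<and>
     \<bar>sub_comp q k n f i - sub_comp qs k n f i\<bar> \<le> real n * C^n * (real_of_int (2*M+1) * e)"
proof (induction n)
  case 0
  then show ?case using f by simp
next
  case (Suc n)
  define W where "W = real_of_int (2*M+1)"
  have W: "W \<ge> 0" using M by (simp add: W_def)
  define g where "g = sub_comp q k n f"
  define gs where "gs = sub_comp qs k n f"
  have IH1: "\<forall>j. \<bar>gs j\<bar> \<le> C^n" and IH2: "\<forall>j. \<bar>g j - gs j\<bar> \<le> real n * C^n * (W * e)"
    using Suc by (auto simp: g_def gs_def W_def)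
  have t: "k + n \<ge> k" by simp
  have 1: "\<bar>sub_op (qs (k+n)) gs i\<bar> \<le> C^(Suc n)" for i
    using sub_op_bound[OF M, of "qs (k+n)" Qb gs "C^n" i] sqs bqs IH1 C by auto
  have 2: "\<bar>sub_op (q (k+n)) (\<lambda>j. g j - gs j) i\<bar> \<le> C * (real n * C^n * (W * e))" for i
    using sub_op_bound[OF M, of "q (k+n)" Qb "\<lambda>j. g j - gs j" "real n * C^n * (W * e)" i] sq bq IH2 C
    by (auto simp: W_def)
  have 3: "\<bar>sub_op (\<lambda>m. q (k+n) m - qs (k+n) m) gs i\<bar> \<le> W * e * C^n" for i
    using sub_op_bound[OF M, of "\<lambda>m. q (k+n) m - qs (k+n) m" e gs "C^n" i] sq sqs dq IH1
    by (auto simp: W_def)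
  have Cn: "C^n \<le> C^Suc n" using C(2) by simp
  have 4: "W * e * C^n \<le> W * e * C^Suc n" using Cn W e by (simp add: mult_left_mono)
  show ?case
  proof
    fix i
    have lin: "sub_op (q (k+n)) g i - sub_op (qs (k+n)) gs i
      = sub_op (q (k+n)) (\<lambda>j. g j - gs j) i + sub_op (\<lambda>m. q (k+n) m - qs (k+n) m) gs i"
      by (rule sub_op_lin[where M=M]) (use sq sqs in auto)
    have "\<bar>sub_op (q (k+n)) g i - sub_op (qs (k+n)) gs i\<bar>
       \<le> C * (real n * C^n * (W * e)) + W * e * C^Suc n"
      unfolding lin using 2[of i] 3[of i] 4 by linarith
    also have "\<dots> = real (Suc n) * C^Suc n * (W*e)" by (simp add: algebra_simps)
    finally show "\<bar>sub_comp qs k (Suc n) f i\<bar> \<le> C ^ Suc n \<and>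
         \<bar>sub_comp q k (Suc n) f i - sub_comp qs k (Suc n) f i\<bar>
         \<le> real (Suc n) * C ^ Suc n * (real_of_int (2 * M + 1) * e)"
      using 1[of i] by (simp add: g_def gs_def W_def)
  qed
qed

lemma opn_le:
  assumes "\<forall>f. (\<forall>j. \<bar>f j\<bar> \<le> 1) \<longrightarrow> (\<forall>i. \<bar>T f i\<bar> \<le> \<bar>T' f i\<bar> + \<delta>)"
  shows "op_norm T \<le> op_norm T' + ereal \<delta>"
proof -
  have "ereal \<bar>T f i\<bar> \<le> op_norm T' + ereal \<delta>" if f: "\<forall>j. \<bar>f j\<bar> \<le> 1" for f i
  proof -
    have a: "ereal \<bar>T' f i\<bar> \<le> op_norm T'" unfolding op_norm_def
      by (rule SUP_upper2[of f]) (use f in \<open>auto intro: SUP_upper\<close>)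
    have "ereal \<bar>T f i\<bar> \<le> ereal (\<bar>T' f i\<bar> + \<delta>)" using assms f by auto
    also have "\<dots> = ereal \<bar>T' f i\<bar> + ereal \<delta>" by simp
    also have "\<dots> \<le> op_norm T' + ereal \<delta>" using a by (rule add_right_mono)
    finally show ?thesis .
  qed
  then show ?thesis unfolding op_norm_def[of T] by (auto intro!: SUP_least)
qed


definition supp :: "mask \<Rightarrow> int \<Rightarrow> bool" where
  "supp a M \<longleftrightarrow> (\<forall>i. \<bar>i\<bar> > M \<longrightarrow> a i = 0)"

lemma supp_range: "supp a M \<Longrightarrow> a j \<noteq> 0 \<Longrightarrow> -M \<le> j \<and> j \<le> M"
  unfolding supp_def by (metis abs_le_iff not_less minus_le_iff)

lemma dm_eq:
  assumes "supp a M"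
  shows "diff_mask a i = (\<Sum>j\<in>{-M..M}. if j \<le> i then (-1) ^ nat (i - j) * a j else 0)"
proof -
  have "(\<Sum>j\<in>{-M..M}. if j \<le> i then (-1) ^ nat (i - j) * a j else 0)
      = (\<Sum>j\<in>{j\<in>{-M..M}. j \<le> i}. (-1) ^ nat (i - j) * a j)"
    by (rule sum.inter_filter[symmetric]) simp
  also have "\<dots> = (\<Sum>j\<in>{j. j \<le> i \<and> a j \<noteq> 0}. (-1) ^ nat (i - j) * a j)"
    by (rule sum.mono_neutral_right) (rule finite_subset[of _ "{-M..M}"], auto dest: supp_range[OF assms])
  finally show ?thesis unfolding diff_mask_def by simp
qed

lemma sum_inj_supp:
  assumes "supp a M" "inj h"
  shows "(\<Sum>i\<in>{i. a (h i) \<noteq> 0}. a (h i)) = (\<Sum>j\<in>{-M..M}. if j \<in> range h then a j else 0)"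
proof -
  have "(\<Sum>i\<in>{i. a (h i) \<noteq> 0}. a (h i)) = (\<Sum>j\<in>h ` {i. a (h i) \<noteq> 0}. a j)"
    by (subst sum.reindex) (use assms(2) in \<open>auto simp: inj_on_def inj_def\<close>)
  also have "\<dots> = (\<Sum>j\<in>{j\<in>{-M..M}. j \<in> range h}. a j)"
    by (rule sum.mono_neutral_left) (rule finite_subset[of _ "{-M..M}"], auto dest: supp_range[OF assms(1)])
  also have "\<dots> = (\<Sum>j\<in>{-M..M}. if j \<in> range h then a j else 0)"
    by (rule sum.inter_filter) simp
  finally show ?thesis .
qed

lemma range_even: "(j::int) \<in> range ((*) 2) \<longleftrightarrow> even j" by auto

lemma range_odd: "(j::int) \<in> range (\<lambda>i. 2*i+1) \<longleftrightarrow> odd j"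
  by (auto elim!: oddE)

lemma neg1_pow: "((-1::real) ^ nat x) = (if even x then 1 else -1)" if "x \<ge> 0"
  using that by (simp add: even_nat_iff)

lemma dm_supp:
  assumes s: "supp a M" and M: "M \<ge> 0"
    and ev: "(\<Sum>i \<in> {i. a (2*i) \<noteq> 0}. a (2*i)) = 1"
    and od: "(\<Sum>i \<in> {i. a (2*i+1) \<noteq> 0}. a (2*i+1)) = 1"
  shows "supp (diff_mask a) M"
  unfolding supp_def
proof (intro allI impI)
  fix i assume i: "\<bar>i\<bar> > M"
  show "diff_mask a i = 0"
  proof (cases "i < -M")
    case True
    then have "{j. j \<le> i \<and> a j \<noteq> 0} = {}" using s by (force simp: supp_def)
    then show ?thesis unfolding diff_mask_def by simp
  next
    case False
    with i have iM: "i > M" by auto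
    have E: "(\<Sum>j\<in>{-M..M}. if even j then a j else 0) = 1"
      using sum_inj_supp[OF s, of "(*) 2"] ev by (simp add: inj_def range_even)
    have O: "(\<Sum>j\<in>{-M..M}. if odd j then a j else 0) = 1"
      using sum_inj_supp[OF s, of "\<lambda>i. 2*i+1"] od by (simp add: inj_def range_odd)
    have "diff_mask a i = (\<Sum>j\<in>{-M..M}. (if even (i - j) then 1 else -1) * a j)"
      unfolding dm_eq[OF s] by (rule sum.cong) (use iM in \<open>auto simp: neg1_pow\<close>)
    also have "\<dots> = (if even i then 1 else -1) *
        ((\<Sum>j\<in>{-M..M}. if even j then a j else 0) - (\<Sum>j\<in>{-M..M}. if odd j then a j else 0))"
      unfolding sum_subtractf[symmetric] sum_distrib_left by (rule sum.cong) auto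
    also have "\<dots> = 0" using E O by simp
    finally show ?thesis .
  qed
qed

lemma dm_diff:
  assumes "supp a M" "supp b M" "M \<ge> 0" "\<forall>j. \<bar>a j - b j\<bar> \<le> e"
  shows "\<bar>diff_mask a i - diff_mask b i\<bar> \<le> real_of_int (2*M+1) * e"
proof -
  have "diff_mask a i - diff_mask b i =
     (\<Sum>j\<in>{-M..M}. if j \<le> i then (-1) ^ nat (i - j) * (a j - b j) else 0)"
    unfolding dm_eq[OF assms(1)] dm_eq[OF assms(2)]
    by (simp add: sum_subtractf[symmetric], rule sum.cong) (auto simp: algebra_simps)
  also have "\<bar>\<dots>\<bar> \<le> (\<Sum>j\<in>{-M..M}. \<bar>if j \<le> i then (-1) ^ nat (i - j) * (a j - b j) else 0\<bar>)"
    by (rule sum_abs)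
  also have "\<dots> \<le> (\<Sum>j\<in>{-M..M}. e)"
  proof (rule sum_mono)
    fix j
    have "e \<ge> 0" using assms(4) by (meson abs_ge_zero order_trans)
    then show "\<bar>if j \<le> i then (-1) ^ nat (i - j) * (a j - b j) else 0\<bar> \<le> e"
      using assms(4) by (auto simp: abs_mult power_abs)
  qed
  also have "\<dots> = real_of_int (2*M+1) * e" using assms(3) by simp
  finally show ?thesis .
qed

lemma dm_zero: "diff_mask (\<lambda>_. 0) i = 0" by (simp add: diff_mask_def)

lemma mn_le:
  assumes "supp d M"
  shows "\<bar>d i\<bar> \<le> mask_norm d"
  unfolding mask_norm_def
proof (rule cSUP_upper)
  have "range (\<lambda>i. \<bar>d i\<bar>) \<subseteq> (\<lambda>i. \<bar>d i\<bar>) ` {-M..M} \<union> {0}"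
    using assms by (force simp: supp_def)
  then show "bdd_above (range (\<lambda>i. \<bar>d i\<bar>))"
    by (rule bdd_above_mono[rotated]) (intro bdd_above_finite, simp)
qed simp

theorem proposition9:
  fixes astar :: "nat \<Rightarrow> int \<Rightarrow> real"
  assumes "local_scheme astar"
    and "\<exists>B. \<forall>k. sub_norm (astar k) \<le> B"
    and "reproduces_constants astar"
    and "condition_A astar"
  shows "\<forall>a :: nat \<Rightarrow> int \<Rightarrow> real. local_scheme a \<and> reproduces_constants a \<and>
           (\<lambda>k. mask_norm (\<lambda>i. a k i - astar k i)) \<longlonglongrightarrow> 0
           \<longrightarrow> condition_A a"
proof (intro allI impI)
  fix a :: "nat \<Rightarrow> int \<Rightarrow> real"
  assume H: "local_scheme a \<and> reproduces_constants a \<and>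
           (\<lambda>k. mask_norm (\<lambda>i. a k i - astar k i)) \<longlonglongrightarrow> 0"
  obtain Na where Na: "Na > 0" "\<forall>k i. \<bar>i\<bar> > Na \<longrightarrow> a k i = 0"
    using H unfolding local_scheme_def by blast
  obtain Ns where Ns: "Ns > 0" "\<forall>k i. \<bar>i\<bar> > Ns \<longrightarrow> astar k i = 0"
    using assms(1) unfolding local_scheme_def by blast
  define M where "M = max Na Ns"
  have M: "M > 0" using Na Ns by (simp add: M_def)
  have sa: "supp (a k) M" for k using Na by (auto simp: supp_def M_def)
  have ss: "supp (astar k) M" for k using Ns by (auto simp: supp_def M_def)
  have sd: "supp (\<lambda>i. a k i - astar k i) M" for k using sa ss by (auto simp: supp_def)
  obtain B where B: "\<forall>k. sub_norm (astar k) \<le> B" using assms(2) by blast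
  have bs: "\<bar>astar k i\<bar> \<le> B" for k i
  proof -
    have fin1: "finite {p. astar k (2*p) \<noteq> 0}"
    proof (rule finite_subset[of _ "{-M..M}"])
      show "{p. astar k (2*p) \<noteq> 0} \<subseteq> {-M..M}"
      proof
        fix p assume "p \<in> {p. astar k (2*p) \<noteq> 0}"
        then have "-M \<le> 2*p \<and> 2*p \<le> M" using supp_range[OF ss[of k]] by auto
        then show "p \<in> {-M..M}" using M by auto
      qed
    qed simp
    have fin2: "finite {p. astar k (2*p+1) \<noteq> 0}"
    proof (rule finite_subset[of _ "{-M..M}"])
      show "{p. astar k (2*p+1) \<noteq> 0} \<subseteq> {-M..M}"
      proof
        fix p assume "p \<in> {p. astar k (2*p+1) \<noteq> 0}"
        then have "-M \<le> 2*p+1 \<and> 2*p+1 \<le> M" using supp_range[OF ss[of k]] by auto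
        then show "p \<in> {-M..M}" using M by auto
      qed
    qed simp
    have e: "\<bar>astar k (2*p)\<bar> \<le> B" for p
    proof (cases "astar k (2*p) = 0")
      case True
      have "0 \<le> sub_norm (astar k)" unfolding sub_norm_def by (simp add: sum_nonneg le_max_iff_disj)
      then show ?thesis using True B by (metis abs_zero order_trans)
    next
      case False
      have "\<bar>astar k (2*p)\<bar> \<le> (\<Sum>i \<in> {i. astar k (2*i) \<noteq> 0}. \<bar>astar k (2*i)\<bar>)"
        using False by (intro member_le_sum fin1) auto
      also have "\<dots> \<le> sub_norm (astar k)" unfolding sub_norm_def by simp
      finally show ?thesis using B order_trans by blast
    qed
    have o: "\<bar>astar k (2*p+1)\<bar> \<le> B" for p
    proof (cases "astar k (2*p+1) = 0")
      case True
      have "0 \<le> sub_norm (astar k)" unfolding sub_norm_def by (simp add: sum_nonneg le_max_iff_disj)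
      then show ?thesis using True B by (metis abs_zero order_trans)
    next
      case False
      have "\<bar>astar k (2*p+1)\<bar> \<le> (\<Sum>i \<in> {i. astar k (2*i+1) \<noteq> 0}. \<bar>astar k (2*i+1)\<bar>)"
        using False by (intro member_le_sum fin2) auto
      also have "\<dots> \<le> sub_norm (astar k)" unfolding sub_norm_def by simp
      finally show ?thesis using B order_trans by blast
    qed
    show ?thesis
    proof (cases "even i")
      case True then obtain p where "i = 2*p" by blast
      then show ?thesis using e by simp
    next
      case False then obtain p where "i = 2*p+1" by (blast elim: oddE)
      then show ?thesis using o by simp
    qed
  qed
  have B0: "B \<ge> 0" using bs[of 0 0] by linarith
  define q where "q = (\<lambda>k. diff_mask (a k))"
  define qs where "qs = (\<lambda>k. diff_mask (astar k))"
  have sq: "\<forall>t m. \<bar>m\<bar> > M \<longrightarrow> q t m = 0"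
    using dm_supp[OF sa, of _ ] H M unfolding reproduces_constants_def supp_def q_def by auto
  have sqs: "\<forall>t m. \<bar>m\<bar> > M \<longrightarrow> qs t m = 0"
    using dm_supp[OF ss, of _ ] assms(3) M unfolding reproduces_constants_def supp_def qs_def by auto
  obtain K n where Kn: "n > 0" "(SUP k \<in> {K..}. op_norm (sub_comp qs k n)) < 1"
    using assms(4) unfolding condition_A_def qs_def by blast
  define c where "c = (SUP k \<in> {K..}. op_norm (sub_comp qs k n))"
  obtain r where r: "c < ereal r" "ereal r < 1" using Kn(2) ereal_dense2 unfolding c_def by blast
  have r1: "r < 1" using r by simp
  define \<delta> where "\<delta> = (1 - r) / 2"
  have \<delta>: "\<delta> > 0" using r1 by (simp add: \<delta>_def)
  define W where "W = real_of_int (2*M+1)"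
  have W: "W \<ge> 1" using M by (simp add: W_def)
  define Qb where "Qb = W * (B + 1)"
  define C where "C = W * Qb"
  have "1 * 1 \<le> W * (B + 1)" by (rule mult_mono) (use W B0 in auto)
  then have Qb1: "Qb \<ge> 1" by (simp add: Qb_def)
  have "1 * 1 \<le> W * Qb" by (rule mult_mono) (use W Qb1 in auto)
  then have C1: "C \<ge> 1" by (simp add: C_def)
  define e where "e = \<delta> / (real n * C^n * W)"
  have epos: "e > 0" using \<delta> Kn(1) C1 W by (simp add: e_def)
  define eps where "eps = min 1 (e / W)"
  have eps: "eps > 0" using epos W by (simp add: eps_def)
  have eps1: "eps \<le> 1" and eps2: "eps \<le> e / W" by (simp_all add: eps_def)
  obtain K1 where K1: "\<forall>t\<ge>K1. norm (mask_norm (\<lambda>i. a t i - astar t i) - 0) < eps"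
    using H eps unfolding LIMSEQ_iff by blast
  define K2 where "K2 = max K K1"
  have dd: "\<bar>a t j - astar t j\<bar> \<le> eps" if "t \<ge> K2" for t j
  proof -
    have "\<bar>a t j - astar t j\<bar> \<le> mask_norm (\<lambda>i. a t i - astar t i)" using mn_le[OF sd] by simp
    also have "\<dots> \<le> eps"
    proof -
      have "norm (mask_norm (\<lambda>i. a t i - astar t i) - 0) < eps" using K1 that by (simp add: K2_def)
      then show ?thesis by simp
    qed
    finally show ?thesis .
  qed
  have bq: "\<forall>t\<ge>K2. \<forall>m. \<bar>q t m\<bar> \<le> Qb"
  proof (intro allI impI)
    fix t m assume t: "t \<ge> K2"
    have "\<forall>j. \<bar>a t j - (\<lambda>_. 0) j\<bar> \<le> B + 1"
    proof
      fix j
      have "\<bar>a t j\<bar> \<le> \<bar>a t j - astar t j\<bar> + \<bar>astar t j\<bar>"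
        using abs_triangle_ineq[of "a t j - astar t j" "astar t j"] by simp
      then show "\<bar>a t j - (\<lambda>_. 0) j\<bar> \<le> B + 1" using dd[OF t, of j] bs[of t j] eps1 by simp
    qed
    from dm_diff[OF sa, of "\<lambda>_. 0", OF _ _ this, of m] M
    show "\<bar>q t m\<bar> \<le> Qb" by (simp add: q_def Qb_def W_def dm_zero supp_def)
  qed
  have bqs: "\<forall>t\<ge>K2. \<forall>m. \<bar>qs t m\<bar> \<le> Qb"
  proof (intro allI impI)
    fix t m
    have "\<forall>j. \<bar>astar t j - (\<lambda>_. 0) j\<bar> \<le> B + 1"
      using bs[of t] by (simp add: add_increasing2)
    from dm_diff[OF ss, of "\<lambda>_. 0", OF _ _ this, of m] M
    show "\<bar>qs t m\<bar> \<le> Qb" by (simp add: qs_def Qb_def W_def dm_zero supp_def)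
  qed
  have dq: "\<forall>t\<ge>K2. \<forall>m. \<bar>q t m - qs t m\<bar> \<le> e"
  proof (intro allI impI)
    fix t m assume t: "t \<ge> K2"
    have "\<forall>j. \<bar>a t j - astar t j\<bar> \<le> e / W"
      using dd[OF t] eps2 order_trans by blast
    from dm_diff[OF sa ss _ this, of m] M
    have "\<bar>q t m - qs t m\<bar> \<le> W * (e / W)" by (simp add: q_def qs_def W_def)
    then show "\<bar>q t m - qs t m\<bar> \<le> e" using W by simp
  qed
  have nC: "real n * C^n * (W * e) = \<delta>"
    using Kn(1) C1 W by (simp add: e_def)
  have main: "op_norm (sub_comp q k n) \<le> op_norm (sub_comp qs k n) + ereal \<delta>" if k: "k \<ge> K2" for k
  proof (rule opn_le, intro allI impI)
    fix f :: seq and i assume f: "\<forall>j. \<bar>f j\<bar> \<le> 1"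
    have "\<forall>t\<ge>k. \<forall>m. \<bar>q t m\<bar> \<le> Qb" "\<forall>t\<ge>k. \<forall>m. \<bar>qs t m\<bar> \<le> Qb" "\<forall>t\<ge>k. \<forall>m. \<bar>q t m - qs t m\<bar> \<le> e"
      using bq bqs dq k by auto
    from comp_est[of M q qs k Qb e C f n, OF _ sq sqs this _ C1 _ f] M epos
    have "\<bar>sub_comp q k n f i - sub_comp qs k n f i\<bar> \<le> \<delta>"
      using nC by (simp add: C_def W_def)
    then show "\<bar>sub_comp q k n f i\<bar> \<le> \<bar>sub_comp qs k n f i\<bar> + \<delta>" by linarith
  qed
  have "(SUP k \<in> {K2..}. op_norm (sub_comp q k n)) \<le> c + ereal \<delta>"
  proof (rule SUP_least)
    fix k assume k: "k \<in> {K2..}"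
    have "op_norm (sub_comp qs k n) \<le> c" unfolding c_def
      by (rule SUP_upper) (use k in \<open>simp add: K2_def\<close>)
    then show "op_norm (sub_comp q k n) \<le> c + ereal \<delta>"
      using main[of k] k add_right_mono order_trans by fastforce
  qed
  also have "\<dots> \<le> ereal r + ereal \<delta>" using r(1) by (intro add_right_mono) simp
  also have "\<dots> = ereal (r + \<delta>)" by simp
  also have "\<dots> < 1" using r1 by (simp add: \<delta>_def field_simps)
  finally show "condition_A a" unfolding condition_A_def using Kn(1) q_def by blast
qed

end
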